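(* Let $s\ge 2$ and $r',s'\in\mathbb N$ with $1\le r'\le s'$, and let $F:U\subseteq\mathcal G(1,s)=\mathbb P^{1,s}\to\mathcal G(r',s')$ be a local orthogonal map. If $\dim V_{F(H\cap U)}=\dim V_{F(U)}$ for every general hyperplane $H$ in $\mathbb P^{1,s}$, then $F$ is null, i.e. $F(U)$ consists of null points of $\mathcal G(r',s')$.
   Context: For $r\le s$, $\mathbb C^{r,s}$ denotes $\mathbb C^{r+s}$ with the indefinite Hermitian form $\langle z,w\rangle_{r,s}=\sum_{i=1}^r z_i\bar w_i-\sum_{i=r+1}^{r+s}z_i\bar w_i$, and $\mathbb P^{r,s}$ its projectivization. $\mathcal G(r,s)$ denotes the Grassmannian $G(r,r+s)$; for $p\in\mathcal G(r,s)$, $V_p\subseteq\mathbb C^{r+s}$ is the corresponding $r$-dimensional subspace, and $p\perp q$ means $V_p\perp V_q$ with respect to $\langle\cdot,\cdot\rangle_{r,s}$; $p$ is null if $V_p\perp V_p$. For a set $K\subseteq\mathcal G(r,s)$, $V_K$ denotes the linear span of $\bigcup_{p\in K}V_p$. A holomorphic map $F:U\to\mathcal G(r',s')$, with $U\subseteq\mathcal G(r,s)$ a connected open set containing a null point, is a local orthogonal map if $F(p)\perp F(q)$ for all $p,q\in U$ with $p\perp q$; it is null if $F(U)$ consists of null points. "General hyperplane" means a hyperplane in a nonempty Zariski-open subset of the space of hyperplanes of $\mathbb P^{1,s}$. *)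

theory Defs
  imports "HOL-Analysis.Analysis"
begin

text \<open>Vectors of C^{r+s} are modelled as complex ^ 'n with 'n a finite linearly ordered
index type, CARD('n) = r + s; the first r indices (w.r.t. the order) are the positive ones.\<close>

definition pos_idx :: "nat \<Rightarrow> 'n::{finite,linorder} \<Rightarrow> bool" where
  "pos_idx r i \<longleftrightarrow> card {j. j < i} < r"

definition herm :: "nat \<Rightarrow> (complex ^ 'n::{finite,linorder}) \<Rightarrow> (complex ^ 'n::{finite,linorder}) \<Rightarrow> complex" where
  "herm r z w = (\<Sum>i\<in>UNIV. (if pos_idx r i then 1 else -1) * z $ i * cnj (w $ i))"

definition grass :: "nat \<Rightarrow> (complex ^ 'n::{finite,linorder}) set set" where
  "grass r = {V. vec.subspace V \<and> vec.dim V = r}"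

definition orth :: "nat \<Rightarrow> (complex ^ 'n::{finite,linorder}) set \<Rightarrow> (complex ^ 'n::{finite,linorder}) set \<Rightarrow> bool" where
  "orth r V W \<longleftrightarrow> (\<forall>v\<in>V. \<forall>w\<in>W. herm r v w = 0)"

definition null_pt :: "nat \<Rightarrow> (complex ^ 'n::{finite,linorder}) set \<Rightarrow> bool" where
  "null_pt r V \<longleftrightarrow> orth r V V"

definition VK :: "(complex ^ 'n::{finite,linorder}) set set \<Rightarrow> (complex ^ 'n::{finite,linorder}) set" where
  "VK K = vec.span (\<Union>K)"

definition pcone :: "(complex ^ 'n::{finite,linorder}) set set \<Rightarrow> (complex ^ 'n::{finite,linorder}) set" where
  "pcone U = {z. z \<noteq> 0 \<and> vec.span {z} \<in> U}"

definition cholo_on :: "(complex ^ 'a::finite) set \<Rightarrow> (complex ^ 'a \<Rightarrow> complex ^ 'b::finite) \<Rightarrow> bool" where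
  "cholo_on W f \<longleftrightarrow> open W \<and> (\<forall>z\<in>W. \<exists>L. (f has_derivative L) (at z) \<and> (\<forall>c v. L (c *s v) = c *s L v))"

definition holo_grass_map :: "nat \<Rightarrow> (complex ^ 'a::{finite,linorder}) set set
    \<Rightarrow> ((complex ^ 'a::{finite,linorder}) set \<Rightarrow> (complex ^ 'b::{finite,linorder}) set) \<Rightarrow> bool" where
  "holo_grass_map r' U F \<longleftrightarrow>
     (\<forall>p\<in>U. F p \<in> grass r') \<and>
     (\<forall>z0\<in>pcone U. \<exists>W f. open W \<and> z0 \<in> W \<and> W \<subseteq> pcone U \<and>
        (\<forall>j<r'. cholo_on W (f j)) \<and>
        (\<forall>z\<in>W. F (vec.span {z}) = vec.span {f j z | j. j < r'}))"

text \<open>Local orthogonal map F : U \<subseteq> G(1,s) = P^{1,s} \<rightarrow> G(r',s'). U is open/connected in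
P^{1,s}, i.e. its cone in C^{1+s} \ {0} is open/connected.\<close>
definition loc_orth_map :: "nat \<Rightarrow> (complex ^ 'a::{finite,linorder}) set set
    \<Rightarrow> ((complex ^ 'a::{finite,linorder}) set \<Rightarrow> (complex ^ 'b::{finite,linorder}) set) \<Rightarrow> bool" where
  "loc_orth_map r' U F \<longleftrightarrow>
     U \<subseteq> grass 1 \<and> open (pcone U) \<and> connected (pcone U) \<and> (\<exists>p\<in>U. null_pt 1 p) \<and>
     holo_grass_map r' U F \<and>
     (\<forall>p\<in>U. \<forall>q\<in>U. orth 1 p q \<longrightarrow> orth r' (F p) (F q))"

definition phyp :: "complex ^ 'a::{finite,linorder} \<Rightarrow> (complex ^ 'a::{finite,linorder}) set set" where
  "phyp a = {L \<in> grass 1. \<forall>z\<in>L. (\<Sum>i\<in>UNIV. a $ i * z $ i) = 0}"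

definition hom_poly :: "(complex ^ 'a::finite \<Rightarrow> complex) \<Rightarrow> bool" where
  "hom_poly p \<longleftrightarrow> (\<exists>d E c. finite E \<and> (\<forall>e\<in>E. (\<Sum>i\<in>UNIV. e i) = (d::nat)) \<and>
      p = (\<lambda>z. \<Sum>e\<in>E. c e * (\<Prod>i\<in>UNIV. z $ i ^ e i)))"

text \<open>Nonempty Zariski-open set of hyperplanes (dual projective space), described by the cone of
coefficient vectors: complement of the common zero locus of a set of homogeneous polynomials.\<close>
definition zariski_open_ne :: "(complex ^ 'a::finite) set \<Rightarrow> bool" where
  "zariski_open_ne Hs \<longleftrightarrow> Hs \<noteq> {} \<and>
     (\<exists>P. (\<forall>p\<in>P. hom_poly p) \<and> Hs = {a. a \<noteq> 0 \<and> (\<exists>p\<in>P. p a \<noteq> 0)})"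

end

theory Submission
  imports Defs "HOL-Computational_Algebra.Polynomial"
begin

definition sg :: "'n::{finite,linorder} \<Rightarrow> complex" where
  "sg i = (if pos_idx 1 i then 1 else -1)"

definition aof :: "complex ^ 'n::{finite,linorder} \<Rightarrow> complex ^ 'n::{finite,linorder}" where
  "aof z = (\<chi> i. sg i * cnj (z $ i))"

lemma herm_add1: "herm r (x + y) w = herm r x w + herm r y w"
  by (simp add: herm_def algebra_simps sum.distrib)

lemma herm_scale1: "herm r (c *s x) w = c * herm r x w"
  by (simp add: herm_def sum_distrib_left algebra_simps)

lemma herm_zero1: "herm r 0 w = 0"
  by (simp add: herm_def)

lemma herm_cnj: "cnj (herm r x y) = herm r y x"
  unfolding herm_def by (auto simp: mult_ac intro!: sum.cong)

lemma herm_span1: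
  assumes "\<forall>v\<in>A. herm r v w = 0" and "x \<in> vec.span A"
  shows "herm r x w = 0"
  using assms(2)
proof (induct rule: vec.span_induct_alt)
  case base
  then show ?case by (simp add: herm_zero1)
next
  case (step c x y)
  then show ?case using assms(1) by (simp add: herm_add1 herm_scale1)
qed

lemma herm_span:
  assumes "\<forall>v\<in>A. \<forall>w\<in>B. herm r v w = 0" and "x \<in> vec.span A" and "y \<in> vec.span B"
  shows "herm r x y = 0"
proof -
  have "\<forall>w\<in>B. herm r x w = 0"
    using assms(1,2) herm_span1 by blast
  then have "\<forall>w\<in>B. herm r w x = 0"
    by (metis herm_cnj complex_cnj_zero)
  then have "herm r y x = 0" using herm_span1 assms(3) by blast
  then show ?thesis by (metis herm_cnj complex_cnj_zero)
qed

lemma herm_aof: "(\<Sum>i\<in>UNIV. aof z $ i * x $ i) = herm 1 x z"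
  by (simp add: aof_def herm_def sg_def mult_ac)

lemma aof_zero: "aof z = 0 \<Longrightarrow> z = 0"
  by (auto simp: aof_def vec_eq_iff sg_def split: if_splits)

lemma tendsto_herm:
  assumes "(g1 \<longlongrightarrow> a) F" "(g2 \<longlongrightarrow> b) F"
  shows "((\<lambda>t. herm r (g1 t) (g2 t)) \<longlongrightarrow> herm r a b) F"
  unfolding herm_def by (intro tendsto_intros assms)

lemma hom_poly_line:
  assumes "hom_poly q"
  shows "\<exists>Q. \<forall>t. poly Q t = q (b + t *s d)"
proof -
  obtain dd :: nat and E c where q: "q = (\<lambda>z. \<Sum>e\<in>E. c e * (\<Prod>i\<in>UNIV. z $ i ^ e i))"
    using assms unfolding hom_poly_def by blast
  define Q where "Q = (\<Sum>e\<in>E. smult (c e) (\<Prod>i\<in>UNIV. [:b $ i, d $ i:] ^ e i))"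
  have "poly Q t = q (b + t *s d)" for t
    by (simp add: Q_def q poly_sum poly_prod mult_ac)
  then show ?thesis by blast
qed

theorem lemma3p2:
  fixes U :: "(complex ^ 'm::{finite,linorder}) set set"
    and F :: "(complex ^ 'm::{finite,linorder}) set \<Rightarrow> (complex ^ 'k::{finite,linorder}) set"
    and s r' s' :: nat
  assumes "CARD('m::{finite,linorder}) = 1 + s" and "s \<ge> 2"
    and "CARD('k::{finite,linorder}) = r' + s'" and "1 \<le> r'" and "r' \<le> s'"
    and "loc_orth_map r' U F"
    and "\<exists>Hs. zariski_open_ne Hs \<and>
           (\<forall>a\<in>Hs. vec.dim (VK (F ` (phyp a \<inter> U))) = vec.dim (VK (F ` U)))"
  shows "\<forall>p\<in>U. null_pt r' (F p)"
proof -
  from assms(7) obtain Hs where HZ: "zariski_open_ne Hs"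
    and HD: "\<forall>a\<in>Hs. vec.dim (VK (F ` (phyp a \<inter> U))) = vec.dim (VK (F ` U))" by blast
  from HZ obtain P where Pp: "\<forall>p\<in>P. hom_poly p" and HsP: "Hs = {a. a \<noteq> 0 \<and> (\<exists>p\<in>P. p a \<noteq> 0)}"
    and Hne: "Hs \<noteq> {}" unfolding zariski_open_ne_def by blast
  from Hne HsP obtain a0 q where qP: "q \<in> P" and qa0: "q a0 \<noteq> 0" by blast
  note LO = assms(6)[unfolded loc_orth_map_def]
  have UG: "U \<subseteq> grass 1" and orthF: "\<forall>p\<in>U. \<forall>q\<in>U. orth 1 p q \<longrightarrow> orth r' (F p) (F q)"
    and HG: "holo_grass_map r' U F" using LO by blast+
  have step1: "null_pt r' (F (vec.span {z}))" if zU: "z \<in> pcone U" and zH: "aof z \<in> Hs" for z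
  proof -
    let ?p = "vec.span {z}"
    have pU: "?p \<in> U" using zU by (simp add: pcone_def)
    let ?H = "phyp (aof z) \<inter> U"
    have o1: "orth r' (F L) (F ?p)" if "L \<in> ?H" for L
    proof -
      have LU: "L \<in> U" and Lz: "\<forall>x\<in>L. (\<Sum>i\<in>UNIV. aof z $ i * x $ i) = 0"
        using that by (auto simp: phyp_def)
      have "\<forall>x\<in>L. \<forall>y\<in>{z}. herm 1 x y = 0" using Lz by (simp add: herm_aof)
      then have "orth 1 L ?p" unfolding orth_def
        using herm_span[of L "{z}" 1] vec.span_superset by blast
      then show ?thesis using orthF LU pU by blast
    qed
    have sub: "VK (F ` ?H) \<subseteq> VK (F ` U)" unfolding VK_def by (rule vec.span_mono) blast
    have eq: "VK (F ` ?H) = VK (F ` U)"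
      using vec.subspace_dim_equal[OF _ _ sub] HD zH unfolding VK_def
      by (simp add: vec.subspace_span)
    have "\<forall>v\<in>\<Union>(F ` ?H). \<forall>w\<in>F ?p. herm r' v w = 0" using o1 unfolding orth_def by blast
    then have o2: "herm r' v u = 0" if "v \<in> VK (F ` ?H)" "u \<in> F ?p" for v u
      using herm_span[of "\<Union>(F ` ?H)" "F ?p" r' v u] that vec.span_superset[of "F ?p"]
      unfolding VK_def by blast
    have Fp: "F ?p \<subseteq> VK (F ` U)" using pU unfolding VK_def
      by (intro subsetI vec.span_base) blast
    show ?thesis unfolding null_pt_def orth_def
    proof (intro ballI)
      fix v u assume "v \<in> F ?p" "u \<in> F ?p"
      then show "herm r' v u = 0" using o2 Fp eq by blast
    qed
  qed
  have step2: "null_pt r' (F (vec.span {z0}))" if z0U: "z0 \<in> pcone U" for z0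
  proof -
    obtain W f where Wo: "open W" and z0W: "z0 \<in> W" and WU: "W \<subseteq> pcone U"
      and hol: "\<forall>j<r'. cholo_on W (f j)"
      and Fr: "\<forall>z\<in>W. F (vec.span {z}) = vec.span {f j z | j. j < r'}"
      using HG z0U unfolding holo_grass_map_def by blast
    define b where "b = aof z0"
    define d where "d = a0 - b"
    define w :: "complex ^ 'm::{finite,linorder}" where "w = (\<chi> i. sg i * cnj (d $ i))"
    have aofl: "aof (z0 + t *s w) = b + cnj t *s d" for t
      by (simp add: vec_eq_iff aof_def b_def w_def sg_def algebra_simps)
    obtain Q where Q: "\<forall>t. poly Q t = q (b + t *s d)"
      using hom_poly_line Pp qP by blast
    have "poly Q 1 \<noteq> 0" using Q qa0 by (simp add: d_def)
    hence Qnz: "Q \<noteq> 0" by auto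
    have fin: "finite (cnj ` {t. poly Q t = 0})" using poly_roots_finite[OF Qnz] by simp
    have ev1: "eventually (\<lambda>t. t \<notin> cnj ` {t. poly Q t = 0}) (at 0)"
      using islimpt_finite[OF fin] islimpt_iff_eventually by metis
    have line: "((\<lambda>t::complex. z0 + t *s w) \<longlongrightarrow> z0) (at 0)"
    proof -
      have "((\<lambda>t::complex. (\<chi> i. z0 $ i + t * w $ i)) \<longlongrightarrow> (\<chi> i. z0 $ i + 0 * w $ i)) (at 0)"
        by (intro tendsto_intros)
      moreover have "(\<lambda>t::complex. (\<chi> i. z0 $ i + t * w $ i)) = (\<lambda>t. z0 + t *s w)"
        by (rule ext) (simp add: vec_eq_iff)
      ultimately show ?thesis by (simp add: vec_eq_iff)
    qed
    have ev2: "eventually (\<lambda>t. z0 + t *s w \<in> W) (at 0)"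
      using topological_tendstoD[OF line Wo z0W] .
    have evnull: "eventually (\<lambda>t. null_pt r' (F (vec.span {z0 + t *s w}))) (at 0)"
      using ev1 ev2
    proof eventually_elim
      case (elim t)
      let ?z = "z0 + t *s w"
      have zU: "?z \<in> pcone U" using elim WU by blast
      then have "?z \<noteq> 0" by (simp add: pcone_def)
      then have "aof ?z \<noteq> 0" using aof_zero by blast
      moreover have "q (aof ?z) \<noteq> 0"
      proof
        assume "q (aof ?z) = 0"
        then have "poly Q (cnj t) = 0" using Q aofl by simp
        then have "t \<in> cnj ` {t. poly Q t = 0}" by (metis (mono_tags) complex_cnj_cnj image_eqI mem_Collect_eq)
        then show False using elim by blast
      qed
      ultimately have "aof ?z \<in> Hs" using HsP qP by blast
      then show ?case using step1 zU by blast
    qed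
    have hz: "herm r' (f j z0) (f k z0) = 0" if jk: "j < r'" "k < r'" for j k
    proof -
      have cj: "isCont (f j) z0" and ck: "isCont (f k) z0"
        using hol jk z0W unfolding cholo_on_def by (meson has_derivative_continuous)+
      define h where "h t = herm r' (f j (z0 + t *s w)) (f k (z0 + t *s w))" for t
      have lim: "(h \<longlongrightarrow> herm r' (f j z0) (f k z0)) (at 0)"
        unfolding h_def
        by (intro tendsto_herm isCont_tendsto_compose[OF cj line] isCont_tendsto_compose[OF ck line])
      have "eventually (\<lambda>t. h t = 0) (at 0)"
        using evnull ev2
      proof eventually_elim
        case (elim t)
        let ?z = "z0 + t *s w"
        have "F (vec.span {?z}) = vec.span {f j ?z | j. j < r'}" using Fr elim by blast
        moreover have "f j ?z \<in> vec.span {f j ?z | j. j < r'}" "f k ?z \<in> vec.span {f j ?z | j. j < r'}"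
          using jk by (auto intro: vec.span_base)
        ultimately show ?case using elim(1) unfolding h_def null_pt_def orth_def by auto
      qed
      then have h0: "(h \<longlongrightarrow> 0) (at 0)" by (rule tendsto_eventually)
      show ?thesis by (rule tendsto_unique[OF _ lim h0]) simp
    qed
    have A: "\<forall>v\<in>{f j z0 | j. j < r'}. \<forall>u\<in>{f j z0 | j. j < r'}. herm r' v u = 0"
      using hz by blast
    have eqF: "F (vec.span {z0}) = vec.span {f j z0 | j. j < r'}" using Fr z0W by blast
    show ?thesis unfolding null_pt_def orth_def eqF
      using herm_span[OF A] by blast
  qed
  show ?thesis
  proof
    fix p assume pU: "p \<in> U"
    then have pG: "vec.subspace p" "vec.dim p = 1" using UG by (auto simp: grass_def)
    obtain B where B: "B \<subseteq> p" "vec.independent B" "p \<subseteq> vec.span B" "card B = vec.dim p"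
      using vec.basis_exists by blast
    then obtain z where Bz: "B = {z}" using pG(2) card_1_singletonE by metis
    have z0: "z \<noteq> 0" using B(2) Bz vec.dependent_zero by blast
    have "vec.span B = p" using B pG(1) vec.span_subspace by blast
    then have pz: "p = vec.span {z}" using Bz by simp
    then have "z \<in> pcone U" using pU z0 by (simp add: pcone_def)
    then show "null_pt r' (F p)" using step2 pz by simp
  qed
qed

end
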